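(* Let $u,w\in(-1,1)$, let $B(z)=\left(\frac{z-w}{1-wz}\right)\left(\frac{z-u}{1-uz}\right)$, let $c$ be the unique critical point of $B$ in the open unit disk $\mathbb{D}$, and let \[ \lambda=\exp\!\left[i\left(\pi+2\arg(1-\overline{c}w)+2\arg(1-\overline{c}u)+2\arg(1-c\overline{B(c)})\right)\right]\left(\frac{B(c)-c}{1-\overline{c}B(c)}\right). \] Then $\lambda$ is real.
   Context: The quantities $\exp(2i\arg(\cdot))$ do not depend on the choice of branch of $\arg$. *)

theory Defs
  imports "HOL-Analysis.Analysis"
begin

definition blaschke2 :: "real \<Rightarrow> real \<Rightarrow> complex \<Rightarrow> complex" where
  "blaschke2 w u z =
     ((z - of_real w) / (1 - of_real w * z)) * ((z - of_real u) / (1 - of_real u * z))"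

end

theory Submission
  imports Defs
begin

lemma exp2Arg: assumes "z \<in> \<real>" shows "exp (\<i> * (2 * of_real (Arg z))) = 1"
proof -
  have "Arg z = 0 \<or> Arg z = pi" using Arg_real[OF assms] by auto
  then show ?thesis
  proof
    assume "Arg z = pi"
    then have "\<i> * (2 * of_real (Arg z)) = 2 * of_real pi * \<i>" by simp
    then show ?thesis using exp_two_pi_i by presburger
  qed simp
qed

lemma frac_aux:
  fixes A B X Y Z W :: complex
  assumes "A \<noteq> 0" "B \<noteq> 0"
  shows "X / A^2 * (Y / B) + Z / B^2 * (W / A) = (X * Y * B + Z * W * A) / (A^2 * B^2)"
  using assms by (simp add: field_simps power2_eq_square)

lemma deriv_b2:
  fixes u w :: real and c :: complex
  assumes "1 - of_real w * c \<noteq> 0" "1 - of_real u * c \<noteq> 0"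
  shows "deriv (blaschke2 w u) c =
     ((1 - of_real w ^ 2) * (c - of_real u) * (1 - of_real u * c)
      + (1 - of_real u ^ 2) * (c - of_real w) * (1 - of_real w * c))
     / ((1 - of_real w * c)^2 * (1 - of_real u * c)^2)"
proof -
  have "(blaschke2 w u has_field_derivative
     ((1 - of_real w ^ 2) * (c - of_real u) * (1 - of_real u * c)
      + (1 - of_real u ^ 2) * (c - of_real w) * (1 - of_real w * c))
     / ((1 - of_real w * c)^2 * (1 - of_real u * c)^2)) (at c)"
  proof -
    have f: "((\<lambda>z. (z - of_real a) / (1 - of_real a * z)) has_field_derivative
       (1 - of_real a ^ 2) / (1 - of_real a * c)^2) (at c)" if "1 - of_real a * c \<noteq> 0" for a :: real
    proof -
      have "((\<lambda>z. (z - of_real a) / (1 - of_real a * z)) has_field_derivative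
        ((1 - 0) * (1 - of_real a * c) - (c - of_real a) * (0 - of_real a * 1)) / ((1 - of_real a * c) * (1 - of_real a * c))) (at c)"
        by (rule DERIV_divide DERIV_diff DERIV_ident DERIV_const DERIV_cmult that)+
      moreover have "((1 - 0) * (1 - of_real a * c) - (c - of_real a) * (0 - of_real a * 1)) / ((1 - of_real a * c) * (1 - of_real a * c)) = (1 - (of_real a::complex) ^ 2) / (1 - of_real a * c)^2"
        by (simp add: algebra_simps power2_eq_square)
      ultimately show ?thesis by simp
    qed
    have "(blaschke2 w u has_field_derivative
       (1 - of_real w ^ 2) / (1 - of_real w * c)^2 * ((c - of_real u) / (1 - of_real u * c))
       + (1 - of_real u ^ 2) / (1 - of_real u * c)^2 * ((c - of_real w) / (1 - of_real w * c))) (at c)"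
      unfolding blaschke2_def[abs_def] by (rule DERIV_mult[OF f[OF assms(1)] f[OF assms(2)]])
    moreover have "(1 - of_real w ^ 2) / (1 - of_real w * c)^2 * ((c - of_real u) / (1 - of_real u * c))
       + (1 - of_real u ^ 2) / (1 - of_real u * c)^2 * ((c - of_real w) / (1 - of_real w * c)) =
     ((1 - of_real w ^ 2) * (c - of_real u) * (1 - of_real u * c)
      + (1 - of_real u ^ 2) * (c - of_real w) * (1 - of_real w * c))
     / ((1 - of_real w * c)^2 * (1 - of_real u * c)^2)"
      by (rule frac_aux[OF assms])
    ultimately show ?thesis by simp
  qed
  then show ?thesis by (rule DERIV_imp_deriv)
qed

theorem lemma3p5:
  fixes u w :: real and c :: complex
  assumes "u \<in> {-1<..<1}" and "w \<in> {-1<..<1}"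
    and "norm c < 1"
    and "deriv (blaschke2 w u) c = 0"
  shows "exp (\<i> * (of_real pi + 2 * of_real (Arg (1 - cnj c * of_real w))
                     + 2 * of_real (Arg (1 - cnj c * of_real u))
                     + 2 * of_real (Arg (1 - c * cnj (blaschke2 w u c)))))
         * ((blaschke2 w u c - c) / (1 - cnj c * blaschke2 w u c)) \<in> \<real>"
proof -
  have u: "\<bar>u\<bar> < 1" and w: "\<bar>w\<bar> < 1" using assms(1,2) by auto
  have nz: "1 - of_real a * c \<noteq> 0" if "\<bar>a\<bar> < 1" for a :: real
  proof
    assume "1 - of_real a * c = 0"
    then have "norm (of_real a * c) = 1" by (metis eq_iff_diff_eq_0 norm_one)
    moreover have "norm (of_real a * c) < 1"
    proof -
      have "\<bar>a\<bar> * norm c \<le> 1 * norm c" using that by (intro mult_right_mono) auto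
      then show ?thesis using assms(3) by (simp add: norm_mult)
    qed
    ultimately show False by simp
  qed
  define N where "N = (1 - of_real w ^ 2) * (c - of_real u) * (1 - of_real u * c)
      + (1 - of_real u ^ 2) * (c - of_real w) * (1 - of_real w * c)"
  have "N / ((1 - of_real w * c)^2 * (1 - of_real u * c)^2) = 0"
    using assms(4) deriv_b2[OF nz[OF w] nz[OF u]] unfolding N_def by simp
  then have N0: "N = 0" using nz[OF w] nz[OF u] by simp
  define s where "s = u + w"
  define p where "p = 1 + u * w"
  have "N = - of_real (1 - u * w) * (of_real s * c^2 - 2 * of_real p * c + of_real s)"
    unfolding N_def s_def p_def by (simp add: algebra_simps power2_eq_square)
  moreover have "1 - u * w \<noteq> 0"
  proof -
    have "\<bar>u * w\<bar> < 1" using u w by (simp add: abs_mult) (metis abs_ge_zero abs_mult abs_mult_less mult_1_right)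
    then show ?thesis by auto
  qed
  ultimately have Q: "of_real s * c^2 - 2 * of_real p * c + of_real s = 0" using N0
    by (metis (no_types, opaque_lifting) mult_eq_0_iff neg_equal_0_iff_equal of_real_eq_0_iff)
  have sp: "\<bar>s\<bar> < p"
  proof (cases "u + w \<ge> 0")
    case True
    have "0 < (1 - u) * (1 - w)" using u w by (intro mult_pos_pos) auto
    then show ?thesis using True by (simp add: algebra_simps s_def p_def)
  next
    case False
    have "0 < (1 + u) * (1 + w)" using u w by (intro mult_pos_pos) auto
    then show ?thesis using False by (simp add: algebra_simps s_def p_def)
  qed
  have "Im (of_real s * c^2 - 2 * of_real p * c + of_real s) = 0" using Q by simp
  then have "Im c * (2 * s * Re c - 2 * p) = 0" by (simp add: power2_eq_square algebra_simps)
  moreover have "2 * s * Re c - 2 * p \<noteq> 0"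
  proof -
    have "\<bar>Re c\<bar> < 1" using assms(3) abs_Re_le_cmod le_less_trans by blast
    then have "\<bar>s * Re c\<bar> \<le> \<bar>s\<bar>" by (simp add: abs_mult mult_left_le)
    then show ?thesis using sp by auto
  qed
  ultimately have "Im c = 0" by simp
  then have cR: "c \<in> \<real>" by (simp add: complex_is_Real_iff)
  then obtain x where x: "c = of_real x" using Reals_cases by blast
  have bR: "blaschke2 w u c \<in> \<real>" unfolding blaschke2_def x by simp
  have cc: "cnj c = c" using cR Reals_cnj_iff by blast
  have cb: "cnj (blaschke2 w u c) = blaschke2 w u c" using bR Reals_cnj_iff by blast
  define a1 where "a1 = Arg (1 - cnj c * of_real w)"
  define a2 where "a2 = Arg (1 - cnj c * of_real u)"
  define a3 where "a3 = Arg (1 - c * cnj (blaschke2 w u c))"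
  have e1: "exp (\<i> * (2 * of_real a1)) = 1" unfolding a1_def by (rule exp2Arg) (simp add: cc x)
  have e2: "exp (\<i> * (2 * of_real a2)) = 1" unfolding a2_def by (rule exp2Arg) (simp add: cc x)
  have e3: "exp (\<i> * (2 * of_real a3)) = 1" unfolding a3_def by (rule exp2Arg) (use cR bR cb in auto)
  have "exp (\<i> * (of_real pi + 2 * of_real a1 + 2 * of_real a2 + 2 * of_real a3))
     = exp (\<i> * of_real pi) * exp (\<i> * (2 * of_real a1)) * exp (\<i> * (2 * of_real a2)) * exp (\<i> * (2 * of_real a3))"
    by (simp add: distrib_left exp_add)
  also have "\<dots> = -1" using e1 e2 e3 by (simp add: exp_pi_i exp_pi_i' )
  finally have E: "exp (\<i> * (of_real pi + 2 * of_real a1 + 2 * of_real a2 + 2 * of_real a3)) = -1" .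
  show ?thesis unfolding a1_def[symmetric] a2_def[symmetric] a3_def[symmetric] E
    using cR bR by (simp add: cc)
qed

end
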